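(* Let $x\ge 2$ be real and let $2\le\lambda<3$. For a positive integer $n$ let $p_n$ denote the least prime factor of $n$, and for each prime $p\mid n$ define \[ w_p(n)=\begin{cases} 1-\dfrac{\log p}{\log x} & \text{if } p=p_n,\\[2mm] \dfrac{\log p_n}{\log x} & \text{if } p>p_n \text{ and } p<x^{1/2},\\[2mm] 1-\dfrac{\log p}{\log x} & \text{if } p>p_n \text{ and } p\ge x^{1/2},\end{cases} \] and \[ w(n)=1-\frac{1}{3-\lambda}\sum_{\substack{p\mid n\\ p<x}} w_p(n). \] If $n\le x^\lambda$ and $w(n)>0$, then $n$ has at most $2$ distinct prime factors.
   Context: All sums over $p$ run over primes. *)

theory Defs
  imports "HOL-Computational_Algebra.Primes" Complex_Main
begin

text \<open>Least prime factor p_n of a positive integer n (only used when n > 1).\<close>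
definition least_pf :: "nat \<Rightarrow> nat" where
  "least_pf n = Min (prime_factors n)"

definition wp :: "real \<Rightarrow> nat \<Rightarrow> nat \<Rightarrow> real" where
  "wp x n p =
     (if p = least_pf n then 1 - ln (real p) / ln x
      else if p > least_pf n \<and> real p < x powr (1/2) then ln (real (least_pf n)) / ln x
      else 1 - ln (real p) / ln x)"

definition wfun :: "real \<Rightarrow> real \<Rightarrow> nat \<Rightarrow> real" where
  "wfun x lam n = 1 - (1 / (3 - lam)) *
     (\<Sum>p\<in>{p \<in> prime_factors n. real p < x}. wp x n p)"

end

theory Submission
  imports Defs
begin

lemma sum_ln_pf:
  fixes n :: nat assumes "n > 0"
  shows "(\<Sum>p\<in>prime_factors n. ln (real p)) \<le> ln (real n)"
proof -
  have "real n = real (\<Prod>p\<in>prime_factors n. p ^ multiplicity p n)"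
    using prime_factorization_nat[OF assms] by (rule arg_cong)
  also have "\<dots> = (\<Prod>p\<in>prime_factors n. real p ^ multiplicity p n)" by (simp del: prime_factorization_nat)
  finally have "ln (real n) = ln (\<Prod>p\<in>prime_factors n. real p ^ multiplicity p n)"
    by (rule arg_cong)
  also have "\<dots> = (\<Sum>p\<in>prime_factors n. ln (real p ^ multiplicity p n))"
  proof (rule ln_prod)
    fix i assume "i \<in> prime_factors n"
    hence "i > 0" using in_prime_factors_imp_prime prime_gt_0_nat by blast
    thus "real i ^ multiplicity i n \<noteq> 0" by simp
  qed simp
  also have "\<dots> = (\<Sum>p\<in>prime_factors n. real (multiplicity p n) * ln (real p))"
    by (intro sum.cong refl) (simp add: ln_realpow prime_gt_0_nat)
  finally have eq: "ln (real n) = (\<Sum>p\<in>prime_factors n. real (multiplicity p n) * ln (real p))" .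
  have "(\<Sum>p\<in>prime_factors n. ln (real p)) \<le> (\<Sum>p\<in>prime_factors n. real (multiplicity p n) * ln (real p))"
  proof (intro sum_mono)
    fix p assume p: "p \<in> prime_factors n"
    have "multiplicity p n > 0" using p by (simp add: prime_factors_multiplicity)
    hence "real (multiplicity p n) \<ge> 1" by simp
    moreover have "p \<ge> 1" using p in_prime_factors_imp_prime prime_ge_1_nat by blast
    hence "ln (real p) \<ge> 0" by simp
    ultimately show "ln (real p) \<le> real (multiplicity p n) * ln (real p)"
      using mult_right_mono[of 1 "real (multiplicity p n)" "ln (real p)"] by simp
  qed
  then show ?thesis using eq by simp
qed

theorem lemma1:
  fixes x lam :: real and n :: nat
  assumes "x \<ge> 2" and "2 \<le> lam" and "lam < 3"
    and "n > 0"
    and "real n \<le> x powr lam"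
    and "wfun x lam n > 0"
  shows "card (prime_factors n) \<le> 2"
proof (rule ccontr)
  assume card: "\<not> card (prime_factors n) \<le> 2"
  define P where "P = prime_factors n"
  define m where "m = least_pf n"
  define L where "L = ln x"
  define S where "S = (\<Sum>p\<in>{p \<in> P. real p < x}. wp x n p)"
  have finP: "finite P" unfolding P_def by simp
  have Pne: "P \<noteq> {}" using card unfolding P_def by auto
  have mP: "m \<in> P" using finP Pne unfolding m_def least_pf_def P_def by simp
  have mmin: "\<And>q. q \<in> P \<Longrightarrow> m \<le> q" using finP unfolding m_def least_pf_def P_def by simp
  have Lpos: "L > 0" unfolding L_def using assms(1) by simp
  have primeP: "\<And>p. p \<in> P \<Longrightarrow> prime p" unfolding P_def by auto
  have lnpos: "\<And>p. p \<in> P \<Longrightarrow> ln (real p) \<ge> 0" 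
  proof -
    fix p assume "p \<in> P"
    hence "p \<ge> 1" using primeP prime_ge_1_nat by blast
    thus "ln (real p) \<ge> 0" by simp
  qed
  have nonneg: "\<And>p. p \<in> P \<Longrightarrow> real p < x \<Longrightarrow> wp x n p \<ge> 0"
  proof -
    fix p assume p: "p \<in> P" "real p < x"
    have "ln (real p) \<le> L" unfolding L_def using p primeP[OF p(1)] by (simp add: prime_gt_0_nat)
    hence a: "1 - ln (real p) / L \<ge> 0" using Lpos by simp
    have b: "ln (real m) / L \<ge> 0" using lnpos[OF mP] Lpos by simp
    show "wp x n p \<ge> 0" unfolding wp_def using a b unfolding L_def m_def by auto
  qed
  have key: "S \<ge> 3 - lam"
  proof (cases "\<exists>q\<in>P. q \<noteq> m \<and> real q < x powr (1/2)")
    case True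
    then obtain q where q: "q \<in> P" "q \<noteq> m" "real q < x powr (1/2)" by blast
    have "x powr (1/2) \<le> x powr 1" using assms(1) by (intro powr_mono) auto
    hence qx: "real q < x" using q assms(1) by simp
    have mq: "m < q" using mmin[OF q(1)] q(2) by simp
    hence mx: "real m < x" using qx by simp
    have "{m, q} \<subseteq> {p \<in> P. real p < x}" using mP q(1) qx mx by auto
    hence "(\<Sum>p\<in>{m,q}. wp x n p) \<le> S" unfolding S_def
      by (intro sum_mono2) (use finP nonneg in auto)
    moreover have "(\<Sum>p\<in>{m,q}. wp x n p) = 1"
      using q mq Lpos unfolding wp_def m_def L_def by (simp add: field_simps)
    ultimately show ?thesis using assms(2) by simp
  next
    case False
    define g where "g p = (if real p < x then wp x n p else 0) + ln (real p) / L" for p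
    have g1: "\<And>p. p \<in> P \<Longrightarrow> g p \<ge> 1"
    proof -
      fix p assume p: "p \<in> P"
      show "g p \<ge> 1"
      proof (cases "real p < x")
        case False
        hence "ln (real p) \<ge> L" unfolding L_def using assms(1) by simp
        thus ?thesis using False Lpos unfolding g_def by simp
      next
        case True
        have "wp x n p = 1 - ln (real p) / L"
        proof (cases "p = m")
          case True thus ?thesis unfolding wp_def m_def L_def by simp
        next
          case ne: False
          hence "\<not> real p < x powr (1/2)" using False p by blast
          thus ?thesis using ne unfolding wp_def m_def L_def by auto
        qed
        thus ?thesis using True unfolding g_def by simp
      qed
    qed
    have "real (card P) \<le> (\<Sum>p\<in>P. g p)"
      using sum_mono[of P "\<lambda>_. 1::real" g] g1 by simp
    moreover have "(\<Sum>p\<in>P. g p) = S + (\<Sum>p\<in>P. ln (real p)) / L"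
      unfolding g_def S_def sum.distrib sum_divide_distrib
      by (simp add: sum.inter_filter[OF finP])
    moreover have "(\<Sum>p\<in>P. ln (real p)) \<le> lam * L"
    proof -
      have "(\<Sum>p\<in>P. ln (real p)) \<le> ln (real n)" unfolding P_def by (rule sum_ln_pf[OF assms(4)])
      also have "\<dots> \<le> ln (x powr lam)" 
      proof -
        have "real n > 0" using assms(4) by simp
        moreover have "x powr lam > 0" using assms(1) by simp
        ultimately show ?thesis using assms(5) by (simp only: ln_le_cancel_iff)
      qed
      also have "\<dots> = lam * L" unfolding L_def using assms(1) by (simp add: ln_powr)
      finally show ?thesis .
    qed
    moreover have "real (card P) \<ge> 3" using card unfolding P_def by simp
    moreover have "(\<Sum>p\<in>P. ln (real p)) / L \<le> lam"
      using calculation(3) Lpos by (simp add: divide_le_eq)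
    ultimately have "S + lam \<ge> 3" by linarith
    thus ?thesis by simp
  qed
  have "wfun x lam n = 1 - S / (3 - lam)" unfolding wfun_def S_def P_def by simp
  also have "\<dots> \<le> 0" using key assms(3) by (simp add: field_simps)
  finally show False using assms(6) by simp
qed

end
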